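(* Let $\mathbf{\Omega}\subset\mathbb{R}^n$ be compact with nonempty interior, let $f:\mathbf{\Omega}\to\mathbb{R}$ be continuous, and let $\lambda$ be a finite nonnegative Borel measure on $\mathbf{\Omega}$ whose support is exactly $\mathbf{\Omega}$. Let $\underline{f}=\min_{\mathbf{x}\in\mathbf{\Omega}}f(\mathbf{x})$ and $\overline{f}=\max_{\mathbf{x}\in\mathbf{\Omega}}f(\mathbf{x})$. Let $\#\lambda$ be the pushforward of $\lambda$ by $f$, with moments $\#\lambda_k=\int_{\mathbf{\Omega}} f(\mathbf{x})^k\,d\lambda(\mathbf{x})$, $k\in\mathbb{N}$. For $r\in\mathbb{N}$ let $\mathbf{H}_r(\#\lambda)$ be the $(r+1)\times(r+1)$ Hankel matrix with entries $\mathbf{H}_r(\#\lambda)(i,j)=\#\lambda_{i+j}$ and $\mathbf{H}_r(x;\#\lambda)$ the $(r+1)\times(r+1)$ Hankel matrix with entries $\mathbf{H}_r(x;\#\lambda)(i,j)=\#\lambda_{i+j+1}$, $i,j=0,\dots,r$, and define \[\tau^\ell_r=\sup_a\{a:\ \mathbf{H}_r(x;\#\lambda)\succeq a\,\mathbf{H}_r(\#\lambda)\},\qquad \tau^u_r=\inf_a\{a:\ a\,\mathbf{H}_r(\#\lambda)\succeq \mathbf{H}_r(x;\#\lambda)\}.\] Then $\underline{f}\le\tau^\ell_r\le\tau^u_r\le\overline{f}$ for all $r\in\mathbb{N}$; the sequence $(\tau^\ell_r)_{r\in\mathbb{N}}$ is monotone non-increasing and $(\tau^u_r)_{r\in\mathbb{N}}$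 is monotone non-decreasing; $\lim_{r\to\infty}\tau^\ell_r=\underline{f}$ and $\lim_{r\to\infty}\tau^u_r=\overline{f}$; and for all $r\in\mathbb{N}$, $\tau^\ell_r=\lambda_{\min}(\mathbf{H}_r(x;\#\lambda),\mathbf{H}_r(\#\lambda))$ and $\tau^u_r=\lambda_{\max}(\mathbf{H}_r(x;\#\lambda),\mathbf{H}_r(\#\lambda))$.
   Context: The pushforward measure is defined by $\#\lambda(C)=\lambda(f^{-1}(C))$ for Borel $C\subset\mathbb{R}$. $\mathbf{A}\succeq\mathbf{B}$ means $\mathbf{A}-\mathbf{B}$ is positive semidefinite. For real symmetric matrices $\mathbf{A},\mathbf{C}$, $\lambda_{\min}(\mathbf{A},\mathbf{C})$ (resp. $\lambda_{\max}(\mathbf{A},\mathbf{C})$) denotes the smallest (resp. largest) generalized eigenvalue of the pair, i.e. the smallest (resp. largest) scalar $\tau$ such that $\mathbf{A}\mathbf{v}=\tau\,\mathbf{C}\mathbf{v}$ for some nonzero vector $\mathbf{v}$. *)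

theory Defs
  imports "HOL-Analysis.Analysis"
begin

definition measure_support :: "'a::topological_space measure \<Rightarrow> 'a set \<Rightarrow> 'a set" where
  "measure_support M \<Omega> = {x \<in> \<Omega>. \<forall>U. open U \<and> x \<in> U \<longrightarrow> emeasure M (U \<inter> \<Omega>) > 0}"

definition push_moment :: "'a measure \<Rightarrow> ('a \<Rightarrow> real) \<Rightarrow> nat \<Rightarrow> real" where
  "push_moment M f k = (\<integral>x. f x ^ k \<partial>M)"

definition hankel0 :: "(nat \<Rightarrow> real) \<Rightarrow> nat \<Rightarrow> nat \<Rightarrow> real" where
  "hankel0 m i j = m (i + j)"

definition hankel1 :: "(nat \<Rightarrow> real) \<Rightarrow> nat \<Rightarrow> nat \<Rightarrow> real" where
  "hankel1 m i j = m (i + j + 1)"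

definition psd_mat :: "nat \<Rightarrow> (nat \<Rightarrow> nat \<Rightarrow> real) \<Rightarrow> bool" where
  "psd_mat n A \<longleftrightarrow> (\<forall>v::nat \<Rightarrow> real. 0 \<le> (\<Sum>i<n. \<Sum>j<n. v i * A i j * v j))"

definition gen_eigenvalues :: "nat \<Rightarrow> (nat \<Rightarrow> nat \<Rightarrow> real) \<Rightarrow> (nat \<Rightarrow> nat \<Rightarrow> real) \<Rightarrow> real set" where
  "gen_eigenvalues n A C = {t. \<exists>v::nat \<Rightarrow> real. (\<exists>i<n. v i \<noteq> 0) \<and>
      (\<forall>i<n. (\<Sum>j<n. A i j * v j) = t * (\<Sum>j<n. C i j * v j))}"

definition gen_eig_min :: "nat \<Rightarrow> (nat \<Rightarrow> nat \<Rightarrow> real) \<Rightarrow> (nat \<Rightarrow> nat \<Rightarrow> real) \<Rightarrow> real" where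
  "gen_eig_min n A C = Min (gen_eigenvalues n A C)"

definition gen_eig_max :: "nat \<Rightarrow> (nat \<Rightarrow> nat \<Rightarrow> real) \<Rightarrow> (nat \<Rightarrow> nat \<Rightarrow> real) \<Rightarrow> real" where
  "gen_eig_max n A C = Max (gen_eigenvalues n A C)"

definition tau_lower :: "(nat \<Rightarrow> real) \<Rightarrow> nat \<Rightarrow> real" where
  "tau_lower m r = Sup {a. psd_mat (r + 1) (\<lambda>i j. hankel1 m i j - a * hankel0 m i j)}"

definition tau_upper :: "(nat \<Rightarrow> real) \<Rightarrow> nat \<Rightarrow> real" where
  "tau_upper m r = Inf {a. psd_mat (r + 1) (\<lambda>i j. a * hankel0 m i j - hankel1 m i j)}"

end

theory Submission
  imports Defs "HOL-Library.Function_Algebras" "HOL-Computational_Algebra.Polynomial"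
begin


lemma psd_mat_Suc: "psd_mat (Suc n) A \<Longrightarrow> psd_mat n A"
  unfolding psd_mat_def
proof
  fix v :: "nat \<Rightarrow> real"
  assume H: "\<forall>v. 0 \<le> (\<Sum>i<Suc n. \<Sum>j<Suc n. v i * A i j * v j)"
  define w where "w = (\<lambda>i. if i < n then v i else 0)"
  have "0 \<le> (\<Sum>i<Suc n. \<Sum>j<Suc n. w i * A i j * w j)" using H by blast
  also have "\<dots> = (\<Sum>i<n. \<Sum>j<n. v i * A i j * v j)"
    by (simp add: w_def)
  finally show "0 \<le> (\<Sum>i<n. \<Sum>j<n. v i * A i j * v j)" .
qed

lemma quad_integral:
  fixes M :: "'a measure" and g :: "'a \<Rightarrow> real"
  assumes int: "\<And>k. integrable M (\<lambda>x. g x ^ k)"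
  shows "(\<Sum>i<n. \<Sum>j<n. v i * (c1 * push_moment M g (i+j+1) + c0 * push_moment M g (i+j)) * v j)
       = (\<integral>x. (c1 * g x + c0) * (\<Sum>i<n. v i * g x ^ i)^2 \<partial>M)"
proof -
  have eq: "(c1 * g x + c0) * (\<Sum>i<n. v i * g x ^ i)^2 =
     (\<Sum>i<n. \<Sum>j<n. v i * v j * c1 * g x ^ (i+j+1) + v i * v j * c0 * g x ^ (i+j))" for x
    by (simp add: power2_eq_square sum_distrib_left sum_distrib_right sum.distrib[symmetric]
        power_add algebra_simps)
  have ii: "integrable M (\<lambda>x. v i * v j * c1 * g x ^ (i+j+1) + v i * v j * c0 * g x ^ (i+j))" for i j
    by (intro Bochner_Integration.integrable_add integrable_mult_right int)
  have "(\<integral>x. (c1 * g x + c0) * (\<Sum>i<n. v i * g x ^ i)^2 \<partial>M) =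
     (\<Sum>i<n. \<Sum>j<n. (\<integral>x. v i * v j * c1 * g x ^ (i+j+1) + v i * v j * c0 * g x ^ (i+j) \<partial>M))"
    unfolding eq
  proof -
    define h where "h = (\<lambda>i j x. v i * v j * c1 * g x ^ (i+j+1) + v i * v j * c0 * g x ^ (i+j))"
    have hi: "integrable M (h i j)" for i j unfolding h_def by (rule ii)
    have "(\<integral>x. (\<Sum>i<n. \<Sum>j<n. h i j x) \<partial>M) = (\<Sum>i<n. (\<integral>x. (\<Sum>j<n. h i j x) \<partial>M))"
      by (rule Bochner_Integration.integral_sum) (use hi in auto)
    also have "\<dots> = (\<Sum>i<n. \<Sum>j<n. (\<integral>x. h i j x \<partial>M))"
      by (rule sum.cong, rule refl, rule Bochner_Integration.integral_sum) (use hi in auto)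
    finally show "(\<integral>x. (\<Sum>i<n. \<Sum>j<n. v i * v j * c1 * g x ^ (i+j+1) + v i * v j * c0 * g x ^ (i+j)) \<partial>M) =
     (\<Sum>i<n. \<Sum>j<n. (\<integral>x. v i * v j * c1 * g x ^ (i+j+1) + v i * v j * c0 * g x ^ (i+j) \<partial>M))"
      unfolding h_def .
  qed
  also have "\<dots> = (\<Sum>i<n. \<Sum>j<n. v i * (c1 * push_moment M g (i+j+1) + c0 * push_moment M g (i+j)) * v j)"
  proof -
    have t: "(\<integral>x. A * g x ^ p + B * g x ^ q \<partial>M) = A * push_moment M g p + B * push_moment M g q" for A B p q
      unfolding push_moment_def by (subst Bochner_Integration.integral_add) (auto intro: int)
    show ?thesis by (simp only: t) (auto intro!: sum.cong simp: algebra_simps)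
  qed
  finally show ?thesis ..
qed

lemma quad_nonneg_zero:
  fixes W F :: real
  assumes "\<And>t. 0 \<le> 2 * t * W + t^2 * F" and "W \<ge> 0"
  shows "W = 0"
proof (rule ccontr)
  assume "W \<noteq> 0"
  hence W: "W > 0" using assms(2) by simp
  define G where "G = \<bar>F\<bar>"
  have G0: "G \<ge> 0" unfolding G_def by simp
  have G: "G + 1 \<noteq> 0" using G0 by linarith
  define t where "t = - W / (G + 1)"
  have ht: "t * (G + 1) = - W" unfolding t_def using G by simp
  have "0 \<le> 2 * t * W + t^2 * F" by (rule assms(1))
  also have "\<dots> \<le> 2 * t * W + t^2 * G" unfolding G_def by (simp add: mult_left_mono)
  finally have h0: "0 \<le> (G+1)^2 * (2 * t * W + t^2 * G)" by simp
  have "(G+1)^2 * (2 * t * W + t^2 * G) = 2*(t*(G+1))*W*(G+1) + (t*(G+1))^2*G"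
    by (simp add: algebra_simps power2_eq_square)
  also have "\<dots> = - (W^2 * (G + 2))" unfolding ht by (simp add: algebra_simps power2_eq_square)
  also have "\<dots> < 0" using W G0 by simp
  finally show False using h0 by simp
qed

lemma psd_null:
  fixes B :: "nat \<Rightarrow> nat \<Rightarrow> real"
  assumes psd: "psd_mat n B" and sym: "\<And>i j. B i j = B j i"
    and z: "(\<Sum>i<n. \<Sum>j<n. v i * B i j * v j) = 0"
  shows "\<forall>i<n. (\<Sum>j<n. B i j * v j) = 0"
proof -
  define w where "w i = (\<Sum>j<n. B i j * v j)" for i
  define W where "W = (\<Sum>i<n. w i ^ 2)"
  define F where "F = (\<Sum>i<n. \<Sum>j<n. w i * B i j * w j)"
  have e1: "(\<Sum>i<n. \<Sum>j<n. w i * B i j * v j) = W"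
    unfolding W_def w_def by (simp add: sum_distrib_left power2_eq_square mult.assoc)
  have e2: "(\<Sum>i<n. \<Sum>j<n. v i * B i j * w j) = W"
  proof -
    have "(\<Sum>i<n. \<Sum>j<n. v i * B i j * w j) = (\<Sum>j<n. \<Sum>i<n. w j * B j i * v i)"
      by (subst sum.swap) (simp add: sym mult.commute mult.left_commute)
    thus ?thesis using e1 by simp
  qed
  have key: "0 \<le> 2 * t * W + t^2 * F" for t
  proof -
    have "0 \<le> (\<Sum>i<n. \<Sum>j<n. (v i + t * w i) * B i j * (v j + t * w j))"
      using spec[OF psd[unfolded psd_mat_def], of "\<lambda>i. v i + t * w i"] by simp
    also have "\<dots> = (\<Sum>i<n. \<Sum>j<n. v i * B i j * v j) + t * (\<Sum>i<n. \<Sum>j<n. w i * B i j * v j)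
        + t * (\<Sum>i<n. \<Sum>j<n. v i * B i j * w j) + t^2 * F"
      unfolding F_def by (simp add: sum.distrib sum_distrib_left algebra_simps power2_eq_square)
    also have "\<dots> = 2 * t * W + t^2 * F" using z e1 e2 by simp
    finally show ?thesis .
  qed
  have "W = 0" by (rule quad_nonneg_zero[OF key]) (simp add: W_def sum_nonneg)
  hence "\<forall>i<n. w i ^ 2 = 0" unfolding W_def by (subst (asm) sum_nonneg_eq_0_iff) auto
  thus ?thesis unfolding w_def by simp
qed

lemma subseq_coords:
  fixes s :: "nat \<Rightarrow> nat \<Rightarrow> real"
  assumes "\<And>k i. i < n \<Longrightarrow> \<bar>s k i\<bar> \<le> B"
  shows "\<exists>\<phi> l. strict_mono \<phi> \<and> (\<forall>i<n. (\<lambda>k. s (\<phi> k) i) \<longlonglongrightarrow> l i)"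
  using assms
proof (induction n)
  case 0
  show ?case by (rule exI[of _ id]) (auto simp: strict_mono_def)
next
  case (Suc n)
  from Suc.prems have "\<And>k i. i < n \<Longrightarrow> \<bar>s k i\<bar> \<le> B" by simp
  from Suc.IH[OF this] obtain \<phi> l where phi: "strict_mono \<phi>" and l: "\<forall>i<n. (\<lambda>k. s (\<phi> k) i) \<longlonglongrightarrow> l i"
    by blast
  have sc: "seq_compact {-B..B}" by (rule compact_imp_seq_compact) simp
  have "\<forall>k. (\<lambda>k. s (\<phi> k) n) k \<in> {-B..B}" 
  proof
    fix k have "\<bar>s (\<phi> k) n\<bar> \<le> B" using Suc.prems[of n "\<phi> k"] by simp
    thus "(\<lambda>k. s (\<phi> k) n) k \<in> {-B..B}" by (auto simp: abs_le_iff)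
  qed
  from seq_compactE[OF sc this] obtain ln \<psi> where psi: "strict_mono \<psi>" and
    ln: "((\<lambda>k. s (\<phi> k) n) \<circ> \<psi>) \<longlonglongrightarrow> ln" by blast
  show ?case
  proof (intro exI conjI allI impI)
    show "strict_mono (\<phi> \<circ> \<psi>)" using phi psi by (rule strict_mono_o)
    fix i assume "i < Suc n"
    show "(\<lambda>k. s ((\<phi> \<circ> \<psi>) k) i) \<longlonglongrightarrow> (l(n := ln)) i"
    proof (cases "i = n")
      case True thus ?thesis using ln by (simp add: comp_def)
    next
      case False
      hence "i < n" using \<open>i < Suc n\<close> by simp
      with l have "(\<lambda>k. s (\<phi> k) i) \<longlonglongrightarrow> l i" by blast
      from LIMSEQ_subseq_LIMSEQ[OF this psi] show ?thesis using False by (simp add: comp_def)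
    qed
  qed
qed

lemma poly_as_sum:
  fixes p :: "real poly"
  assumes "degree p \<le> r"
  shows "(\<Sum>i<r+1. coeff p i * t ^ i) = poly p t"
proof -
  have "(\<Sum>i<r+1. coeff p i * t ^ i) = (\<Sum>i\<le>degree p. coeff p i * t ^ i)"
    by (rule sum.mono_neutral_right) (use assms in \<open>auto simp: coeff_eq_0\<close>)
  thus ?thesis by (simp add: poly_altdef)
qed

lemma core:
  fixes M :: "'a measure" and g :: "'a \<Rightarrow> real"
  assumes fin: "finite_measure M" and meas[measurable]: "g \<in> borel_measurable M"
    and bnd: "\<And>x. x \<in> space M \<Longrightarrow> lo \<le> g x \<and> g x \<le> hi"
    and eps: "\<epsilon> > 0"
    and pos: "emeasure M {x\<in>space M. g x < lo + \<epsilon>/4} > 0"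
  shows "\<exists>N. \<forall>r\<ge>N. \<exists>v. (\<integral>x. (g x - (lo + \<epsilon>)) * (\<Sum>i<r+1. v i * g x ^ i)^2 \<partial>M) < 0"
proof -
  interpret finite_measure M by (rule fin)
  define A where "A = {x\<in>space M. g x < lo + \<epsilon>/4}"
  have Ameas[measurable]: "A \<in> sets M" unfolding A_def by measurable
  have muA: "measure M A > 0" using pos unfolding A_def[symmetric]
    by (simp add: emeasure_eq_measure)
  have "A \<noteq> {}" using muA by auto
  then obtain x0 where "x0 \<in> space M" unfolding A_def by auto
  hence loh: "lo \<le> hi" using bnd by force
  define D where "D = hi - lo"
  have D0: "D \<ge> 0" using loh unfolding D_def by simp
  define mu where "mu = measure M (space M)"
  have mu0: "mu \<ge> 0" unfolding mu_def by simp
  define \<alpha> where "\<alpha> = D + 3*\<epsilon>/4"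
  have al: "\<alpha> > 0" unfolding \<alpha>_def using D0 eps by simp
  define K where "K = 3*\<epsilon>/4 * measure M A"
  have K0: "K > 0" unfolding K_def using eps muA by simp
  define c where "c = K / (D * mu + 1)"
  have c0: "c > 0" unfolding c_def using K0 D0 mu0 by (simp add: add_nonneg_pos)
  have "(D/\<alpha>)^2 < 1" using D0 al eps unfolding \<alpha>_def by (simp add: power_less_one_iff divide_less_eq abs_le_iff)
  from real_arch_pow_inv[OF c0 this] obtain N where Nc: "((D/\<alpha>)^2)^N < c" by blast
  have key: "D * mu * D^(2*N) < 3*\<epsilon>/4 * measure M A * \<alpha>^(2*N)"
  proof -
    have "((D/\<alpha>)^2)^N = D^(2*N) / \<alpha>^(2*N)" by (simp add: power_divide power_mult)
    with Nc have "D^(2*N) / \<alpha>^(2*N) < c" by simp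
    hence "D^(2*N) < c * \<alpha>^(2*N)" using al by (simp add: divide_less_eq)
    hence "(D * mu + 1) * D^(2*N) < (D*mu+1) * (c * \<alpha>^(2*N))"
      using D0 mu0 by (intro mult_strict_left_mono) (auto simp: add_nonneg_pos)
    also have "\<dots> = (c * (D*mu+1)) * \<alpha>^(2*N)" by (simp add: algebra_simps)
    also have "c * (D*mu+1) = 3*\<epsilon>/4 * measure M A" 
    proof -
      have nz: "D*mu+1 \<noteq> 0" using D0 mu0 by (metis add_nonneg_pos mult_nonneg_nonneg zero_less_one less_irrefl)
      show ?thesis unfolding c_def K_def[symmetric] using nz by simp
    qed
    finally have lt: "(D * mu + 1) * D^(2*N) < 3*\<epsilon>/4 * measure M A * \<alpha>^(2*N)" .
    have "D * mu * D^(2*N) \<le> (D * mu + 1) * D^(2*N)" using D0 by (simp add: distrib_right)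
    thus ?thesis using lt by linarith
  qed
  define p where "p = [:hi + \<epsilon>, -1:] ^ N"
  have degp: "degree p \<le> N" unfolding p_def
    by (rule order.trans[OF degree_power_le]) simp
  have polyp: "poly p t = (hi + \<epsilon> - t)^N" for t unfolding p_def by (simp add: poly_power)
  show ?thesis
  proof (rule exI[of _ N], intro allI impI)
    fix r assume r: "N \<le> r"
    define v where "v = coeff p"
    have pv: "(\<Sum>i<r+1. v i * t ^ i) = (hi + \<epsilon> - t)^N" for t
      unfolding v_def using poly_as_sum[of p r t] degp r polyp by simp
    define h where "h x = (g x - (lo + \<epsilon>)) * (hi + \<epsilon> - g x)^(2*N)" for x
    define b where "b x = - (3*\<epsilon>/4 * \<alpha>^(2*N)) * indicator A x + D * D^(2*N)" for x
    have hb: "h x \<le> b x" if x: "x \<in> space M" for x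
    proof -
      have gx: "lo \<le> g x" "g x \<le> hi" using bnd[OF x] by auto
      show ?thesis
      proof (cases "x \<in> A")
        case True
        hence g4: "g x < lo + \<epsilon>/4" unfolding A_def by simp
        have "\<alpha> \<le> hi + \<epsilon> - g x" unfolding \<alpha>_def D_def using g4 by simp
        hence "\<alpha>^(2*N) \<le> (hi + \<epsilon> - g x)^(2*N)" using al by (intro power_mono) auto
        moreover have "g x - (lo + \<epsilon>) \<le> - (3*\<epsilon>/4)" using g4 by simp
        ultimately have "h x \<le> - (3*\<epsilon>/4) * \<alpha>^(2*N)" unfolding h_def
        proof -
          assume a1: "\<alpha>^(2*N) \<le> (hi + \<epsilon> - g x)^(2*N)" and a2: "g x - (lo + \<epsilon>) \<le> - (3*\<epsilon>/4)"
          have Q0: "0 \<le> (hi + \<epsilon> - g x)^(2*N)" by (simp add: zero_le_even_power)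
          have "(g x - (lo + \<epsilon>)) * (hi + \<epsilon> - g x)^(2*N) \<le> - (3*\<epsilon>/4) * (hi + \<epsilon> - g x)^(2*N)"
            by (rule mult_right_mono[OF a2 Q0])
          also have "\<dots> \<le> - (3*\<epsilon>/4) * \<alpha>^(2*N)"
            by (rule mult_left_mono_neg[OF a1]) (use eps in simp)
          finally show "(g x - (lo + \<epsilon>)) * (hi + \<epsilon> - g x)^(2*N) \<le> - (3*\<epsilon>/4) * \<alpha>^(2*N)" .
        qed
        moreover have "0 \<le> D * D^(2*N)" using D0 by simp
        moreover have "b x = - (3*\<epsilon>/4 * \<alpha>^(2*N)) + D * D^(2*N)" unfolding b_def using True by simp
        ultimately show ?thesis by linarith
      next
        case False
        show ?thesis
        proof (cases "g x \<ge> lo + \<epsilon>")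
          case True
          have q: "0 \<le> hi + \<epsilon> - g x" "hi + \<epsilon> - g x \<le> D" unfolding D_def using gx eps True by auto
          have "h x \<le> D * D^(2*N)" unfolding h_def
            by (rule mult_mono) (use q gx True D_def in \<open>auto intro: power_mono\<close>)
          thus ?thesis unfolding b_def using False by simp
        next
          case F2: False
          have "h x \<le> 0" unfolding h_def using F2 gx eps
            by (intro mult_nonpos_nonneg) (auto simp: zero_le_even_power)
          moreover have "0 \<le> D * D^(2*N)" using D0 by simp
          ultimately show ?thesis unfolding b_def using False by simp
        qed
      qed
    qed
    have hint: "integrable M h"
    proof (rule integrable_const_bound[where B="(D+\<epsilon>) * (D+\<epsilon>)^(2*N)"])
      show "h \<in> borel_measurable M" unfolding h_def by measurable
      show "AE x in M. norm (h x) \<le> (D+\<epsilon>) * (D+\<epsilon>)^(2*N)"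
      proof (rule AE_I2)
        fix x assume x: "x \<in> space M"
        have gx: "lo \<le> g x" "g x \<le> hi" using bnd[OF x] by auto
        have "norm (h x) = \<bar>g x - (lo + \<epsilon>)\<bar> * \<bar>hi + \<epsilon> - g x\<bar>^(2*N)"
          unfolding h_def by (simp add: abs_mult power_abs)
        also have "\<dots> \<le> (D+\<epsilon>) * (D+\<epsilon>)^(2*N)"
          using gx eps unfolding D_def by (intro mult_mono power_mono) auto
        finally show "norm (h x) \<le> (D+\<epsilon>) * (D+\<epsilon>)^(2*N)" .
      qed
    qed
    have iA: "integrable M (indicator A :: 'a \<Rightarrow> real)"
      by (rule integrable_real_indicator[OF Ameas]) (simp add: less_top[symmetric])
    have bint: "integrable M b" unfolding b_def using iA by (intro Bochner_Integration.integrable_add integrable_mult_right) auto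
    have "(\<integral>x. h x \<partial>M) \<le> (\<integral>x. b x \<partial>M)" by (rule integral_mono[OF hint bint hb])
    also have "(\<integral>x. b x \<partial>M) = - (3*\<epsilon>/4 * \<alpha>^(2*N)) * measure M A + D * D^(2*N) * mu"
      unfolding b_def mu_def using Ameas iA
      by (subst Bochner_Integration.integral_add) (auto simp: Int_absorb2 sets.sets_into_space)
    also have "\<dots> < 0" using key by (simp add: algebra_simps)
    finally have "(\<integral>x. h x \<partial>M) < 0" .
    moreover have "h x = (g x - (lo + \<epsilon>)) * (\<Sum>i<r+1. v i * g x ^ i)^2" for x
      unfolding h_def pv by (simp add: power_mult mult.commute[of 2 N])
    ultimately show "\<exists>v. (\<integral>x. (g x - (lo + \<epsilon>)) * (\<Sum>i<r+1. v i * g x ^ i)^2 \<partial>M) < 0"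
      by auto
  qed
qed



lemma sum_fun_apply': "(\<Sum>v\<in>S. F v) (i::nat) = (\<Sum>v\<in>S. F v i :: real)"
  by (induction S rule: infinite_finite_induct) auto

definition fscale :: "real \<Rightarrow> (nat \<Rightarrow> real) \<Rightarrow> (nat \<Rightarrow> real)" where
  "fscale c v = (\<lambda>i. c * v i)"

interpretation fv: vector_space fscale
  by unfold_locales (auto simp: fscale_def fun_eq_iff algebra_simps)

lemma bil_swap:
  fixes A :: "nat \<Rightarrow> nat \<Rightarrow> real"
  assumes symA: "\<And>i j. A i j = A j i"
  shows "(\<Sum>i<n. u i * (\<Sum>j<n. A i j * w j)) = (\<Sum>j<n. w j * (\<Sum>i<n. A j i * u i))"
proof -
  have "(\<Sum>i<n. u i * (\<Sum>j<n. A i j * w j)) = (\<Sum>i<n. \<Sum>j<n. u i * A i j * w j)"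
    by (simp add: sum_distrib_left mult.assoc)
  also have "\<dots> = (\<Sum>j<n. \<Sum>i<n. u i * A i j * w j)" by (rule sum.swap)
  also have "\<dots> = (\<Sum>j<n. \<Sum>i<n. w j * (A j i * u i))"
    apply (rule sum.cong[OF refl], rule sum.cong[OF refl])
    subgoal for j i using symA[of i j] by simp
    done
  also have "\<dots> = (\<Sum>j<n. w j * (\<Sum>i<n. A j i * u i))" by (simp add: sum_distrib_left)
  finally show ?thesis .
qed

lemma gen_eig_finite:
  fixes A C :: "nat \<Rightarrow> nat \<Rightarrow> real"
  assumes symA: "\<And>i j. A i j = A j i" and symC: "\<And>i j. C i j = C j i"
    and pd: "\<And>v. (\<exists>i<n. v i \<noteq> 0) \<Longrightarrow> (\<Sum>i<n. \<Sum>j<n. v i * C i j * v j) > 0"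
  shows "finite (gen_eigenvalues n A C)"
proof -
  define E where "E = gen_eigenvalues n A C"
  define bf where "bf u w = (\<Sum>i<n. \<Sum>j<n. u i * C i j * w j)" for u w :: "nat \<Rightarrow> real"
  have "\<forall>t\<in>E. \<exists>v. (\<exists>i<n. v i \<noteq> 0) \<and> (\<forall>i<n. (\<Sum>j<n. A i j * v j) = t * (\<Sum>j<n. C i j * v j))
      \<and> (\<forall>i\<ge>n. v i = 0)"
  proof
    fix t assume "t \<in> E"
    then obtain v where v1: "\<exists>i<n. v i \<noteq> 0" and v2: "\<forall>i<n. (\<Sum>j<n. A i j * v j) = t * (\<Sum>j<n. C i j * v j)"
      unfolding E_def gen_eigenvalues_def by blast
    define w where "w i = (if i < n then v i else 0)" for i
    show "\<exists>v. (\<exists>i<n. v i \<noteq> 0) \<and> (\<forall>i<n. (\<Sum>j<n. A i j * v j) = t * (\<Sum>j<n. C i j * v j))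
      \<and> (\<forall>i\<ge>n. v i = 0)"
    proof (rule exI[of _ w], intro conjI)
      have ws: "(\<Sum>j<n. X j * w j) = (\<Sum>j<n. X j * v j)" for X by (rule sum.cong) (auto simp: w_def)
      show "\<exists>i<n. w i \<noteq> 0" using v1 by (auto simp: w_def)
      show "\<forall>i<n. (\<Sum>j<n. A i j * w j) = t * (\<Sum>j<n. C i j * w j)" unfolding ws using v2 by blast
      show "\<forall>i\<ge>n. w i = 0" by (auto simp: w_def)
    qed
  qed
  from bchoice[OF this] obtain ev where ev: "\<forall>t\<in>E. (\<exists>i<n. ev t i \<noteq> 0) \<and> (\<forall>i<n. (\<Sum>j<n. A i j * ev t j) = t * (\<Sum>j<n. C i j * ev t j))
      \<and> (\<forall>i\<ge>n. ev t i = 0)" by blast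
  have ev1: "\<And>t. t \<in> E \<Longrightarrow> \<exists>i<n. ev t i \<noteq> 0" using ev by blast
  have ev2: "\<And>t i. t \<in> E \<Longrightarrow> i < n \<Longrightarrow> (\<Sum>j<n. A i j * ev t j) = t * (\<Sum>j<n. C i j * ev t j)"
    using ev by blast
  have ev3: "\<And>t i. t \<in> E \<Longrightarrow> n \<le> i \<Longrightarrow> ev t i = 0" using ev by blast
  have bfsym: "bf u w = bf w u" for u w
  proof -
    have "bf u w = (\<Sum>i<n. u i * (\<Sum>j<n. C i j * w j))" unfolding bf_def by (simp add: sum_distrib_left mult.assoc)
    also have "\<dots> = (\<Sum>j<n. w j * (\<Sum>i<n. C j i * u i))" by (rule bil_swap, rule symC)
    also have "\<dots> = bf w u" unfolding bf_def by (simp add: sum_distrib_left mult.assoc)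
    finally show ?thesis .
  qed
  have orth: "bf (ev t) (ev s) = 0" if "t \<in> E" "s \<in> E" "t \<noteq> s" for t s
  proof -
    define u where "u = ev t"
    define w where "w = ev s"
    have f1: "(\<Sum>i<n. u i * (\<Sum>j<n. A i j * w j)) = s * bf u w"
      unfolding bf_def w_def using ev2[OF that(2)]
      by (simp add: sum_distrib_left mult.assoc mult.left_commute)
    have f2: "(\<Sum>i<n. u i * (\<Sum>j<n. A i j * w j)) = (\<Sum>j<n. w j * (\<Sum>i<n. A j i * u i))"
      by (rule bil_swap, rule symA)
    have f3: "(\<Sum>j<n. w j * (\<Sum>i<n. A j i * u i)) = t * bf w u"
      unfolding bf_def u_def using ev2[OF that(1)]
      by (simp add: sum_distrib_left mult.assoc mult.left_commute)
    have e: "s * bf u w = t * bf u w" using f1 f2 f3 bfsym[of u w] by metis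
    have "(t - s) * bf u w = 0" by (simp add: left_diff_distrib e)
    hence "bf u w = 0" using that(3) by simp
    thus ?thesis unfolding u_def w_def .
  qed
  have bfpos: "bf (ev t) (ev t) > 0" if "t \<in> E" for t
    unfolding bf_def by (rule pd[OF ev1[OF that]])
  have inj: "inj_on ev E"
  proof (rule inj_onI)
    fix t s assume ts: "t \<in> E" "s \<in> E" "ev t = ev s"
    show "t = s"
    proof (rule ccontr)
      assume "t \<noteq> s"
      from orth[OF ts(1,2) this] bfpos[OF ts(1)] ts(3) show False by simp
    qed
  qed
  define T where "T = (\<lambda>i. (\<lambda>j. if j = i then 1 else 0 :: real)) ` {..<n}"
  have span: "ev ` E \<subseteq> fv.span T"
  proof
    fix u assume "u \<in> ev ` E"
    then obtain t where t: "t \<in> E" "u = ev t" by blast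
    have "u = (\<Sum>i<n. fscale (u i) (\<lambda>j. if j = i then 1 else 0))"
    proof
      fix j
      show "u j = (\<Sum>i<n. fscale (u i) (\<lambda>j. if j = i then 1 else 0)) j"
      proof -
        have "(\<Sum>i<n. fscale (u i) (\<lambda>j. if j = i then 1 else 0)) j = (\<Sum>i<n. if j = i then u i else 0)"
          unfolding sum_fun_apply' fscale_def by (rule sum.cong) auto
        also have "\<dots> = (if j < n then u j else 0)" by (simp add: sum.delta)
        also have "\<dots> = u j" using ev3[OF t(1), of j] t(2) by auto
        finally show ?thesis by simp
      qed
    qed
    also have "\<dots> \<in> fv.span T"
      by (intro fv.span_sum fv.span_scale fv.span_base) (auto simp: T_def)
    finally show "u \<in> fv.span T" .
  qed
  have indep: "fv.independent (ev ` E)"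
    unfolding fv.independent_explicit_finite_subsets
  proof (intro allI impI ballI)
    fix S u w assume S: "S \<subseteq> ev ` E" "finite S" and z: "(\<Sum>v\<in>S. fscale (u v) v) = 0" and w: "w \<in> S"
    have "0 = bf w (\<Sum>v\<in>S. fscale (u v) v)" unfolding z bf_def by simp
    also have "\<dots> = (\<Sum>v\<in>S. u v * bf w v)"
    proof -
      have lin: "bf w (\<lambda>j. a * x j + y j) = a * bf w x + bf w y" for a x y
        unfolding bf_def by (simp add: sum.distrib sum_distrib_left distrib_left mult.left_commute)
      have "bf w (\<lambda>j. \<Sum>v\<in>S'. u v * v j) = (\<Sum>v\<in>S'. u v * bf w v)" if "finite S'" for S'
        using that
      proof (induction S' rule: finite_induct)
        case empty show ?case by (simp add: bf_def)
      next
        case (insert x F)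
        have "bf w (\<lambda>j. \<Sum>v\<in>insert x F. u v * v j) = bf w (\<lambda>j. u x * x j + (\<Sum>v\<in>F. u v * v j))"
          using insert.hyps by simp
        also have "\<dots> = u x * bf w x + bf w (\<lambda>j. \<Sum>v\<in>F. u v * v j)" by (rule lin)
        finally show ?case using insert by simp
      qed
      moreover have "(\<Sum>v\<in>S. fscale (u v) v) = (\<lambda>j. \<Sum>v\<in>S. u v * v j)"
        by (rule ext) (simp add: sum_fun_apply' fscale_def)
      ultimately show ?thesis using S(2) by simp
    qed
    also have "\<dots> = u w * bf w w"
    proof (rule sum.remove[OF S(2) w, THEN trans])
      have "(\<Sum>v\<in>S - {w}. u v * bf w v) = 0"
      proof (rule sum.neutral, rule ballI)
        fix v assume v: "v \<in> S - {w}"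
        obtain t where t: "t \<in> E" "w = ev t" using S w by blast
        obtain s where s: "s \<in> E" "v = ev s" using S v by blast
        have "t \<noteq> s" using t s v by auto
        thus "u v * bf w v = 0" using orth[OF t(1) s(1)] t s by simp
      qed
      thus "u w * bf w w + (\<Sum>v\<in>S - {w}. u v * bf w v) = u w * bf w w" by simp
    qed
    finally have "u w * bf w w = 0" by simp
    moreover have "bf w w > 0" using S w bfpos by auto
    ultimately show "u w = 0" by simp
  qed
  have "finite T" unfolding T_def by simp
  from fv.independent_span_bound[OF this indep span] have "finite (ev ` E)" by simp
  thus ?thesis using finite_imageD[OF _ inj] unfolding E_def by blast
qed



definition qf :: "nat \<Rightarrow> (nat \<Rightarrow> nat \<Rightarrow> real) \<Rightarrow> (nat \<Rightarrow> real) \<Rightarrow> real" where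
  "qf n X v = (\<Sum>i<n. \<Sum>j<n. v i * X i j * v j)"

lemma qf_diff: "qf n (\<lambda>i j. X i j - a * Y i j) v = qf n X v - a * qf n Y v"
  unfolding qf_def by (simp add: algebra_simps sum_subtractf sum_distrib_left)

lemma qf_diff2: "qf n (\<lambda>i j. a * Y i j - X i j) v = a * qf n Y v - qf n X v"
  unfolding qf_def by (simp add: algebra_simps sum_subtractf sum_distrib_left)

lemma qf_scale: "qf n X (\<lambda>i. c * v i) = c^2 * qf n X v"
  unfolding qf_def by (simp add: sum_distrib_left power2_eq_square algebra_simps)

lemma qf_zero: "(\<forall>i<n. v i = 0) \<Longrightarrow> qf n X v = 0"
  unfolding qf_def by simp

lemma qf_tendsto:
  assumes "\<And>i. i < n \<Longrightarrow> (\<lambda>k. s k i) \<longlonglongrightarrow> l i"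
  shows "(\<lambda>k. qf n X (s k)) \<longlonglongrightarrow> qf n X l"
  unfolding qf_def using assms by (auto intro!: tendsto_intros)

lemma extract_vec:
  fixes X Y :: "nat \<Rightarrow> nat \<Rightarrow> real" and a :: "nat \<Rightarrow> real"
  assumes neg: "\<And>k. \<exists>w. qf n X w - a k * qf n Y w < 0"
    and lim: "a \<longlonglongrightarrow> c"
  shows "\<exists>v. (\<exists>i<n. v i \<noteq> 0) \<and> qf n X v - c * qf n Y v \<le> 0"
proof -
  from neg obtain W where W: "\<And>k. qf n X (W k) - a k * qf n Y (W k) < 0" by metis
  define nrm where "nrm k = sqrt (\<Sum>i<n. (W k i)^2)" for k
  have npos: "nrm k > 0" for k
  proof (rule ccontr)
    assume "\<not> nrm k > 0"
    hence "(\<Sum>i<n. (W k i)^2) = 0" unfolding nrm_def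
      by (metis real_sqrt_gt_zero sum_nonneg zero_le_power2 order_less_le)
    hence "\<forall>i<n. W k i = 0" by (subst (asm) sum_nonneg_eq_0_iff) auto
    hence "qf n X (W k) - a k * qf n Y (W k) = 0" by (simp add: qf_zero)
    with W[of k] show False by simp
  qed
  define s where "s k i = (1 / nrm k) * W k i" for k i
  have sneg: "qf n X (s k) - a k * qf n Y (s k) < 0" for k
  proof -
    have "qf n X (s k) - a k * qf n Y (s k) = (1/nrm k)^2 * (qf n X (W k) - a k * qf n Y (W k))"
      unfolding s_def qf_scale by (simp add: algebra_simps)
    also have "\<dots> < 0" using W[of k] npos[of k] by (simp add: mult_pos_neg)
    finally show ?thesis .
  qed
  have snorm: "(\<Sum>i<n. (s k i)^2) = 1" for k
  proof -
    have "(\<Sum>i<n. (s k i)^2) = (1/nrm k)^2 * (\<Sum>i<n. (W k i)^2)"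
      unfolding s_def by (simp add: sum_distrib_left power_divide)
    also have "(\<Sum>i<n. (W k i)^2) = (nrm k)^2" unfolding nrm_def
      by (simp add: sum_nonneg)
    finally show ?thesis using npos[of k] by (simp add: power_divide)
  qed
  have sb: "\<bar>s k i\<bar> \<le> 1" if "i < n" for k i
  proof -
    have "(s k i)^2 \<le> (\<Sum>i<n. (s k i)^2)" by (rule member_le_sum) (use that in auto)
    hence "(s k i)^2 \<le> 1^2" using snorm by simp
    thus ?thesis by (simp add: abs_square_le_1)
  qed
  from subseq_coords[of n s 1, OF sb] obtain \<phi> l where phi: "strict_mono \<phi>"
    and l: "\<forall>i<n. (\<lambda>k. s (\<phi> k) i) \<longlonglongrightarrow> l i" by blast
  have "(\<lambda>k. \<Sum>i<n. (s (\<phi> k) i)^2) \<longlonglongrightarrow> (\<Sum>i<n. (l i)^2)"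
    using l by (auto intro!: tendsto_intros)
  moreover have "(\<lambda>k. \<Sum>i<n. (s (\<phi> k) i)^2) \<longlonglongrightarrow> 1" using snorm by simp
  ultimately have "(\<Sum>i<n. (l i)^2) = 1" using LIMSEQ_unique by blast
  hence nz: "\<exists>i<n. l i \<noteq> 0" by (metis (no_types, lifting) lessThan_iff sum.neutral zero_neq_one power_zero_numeral)
  have aphi: "(\<lambda>k. a (\<phi> k)) \<longlonglongrightarrow> c" using LIMSEQ_subseq_LIMSEQ[OF lim phi] by (simp add: comp_def)
  have "(\<lambda>k. qf n X (s (\<phi> k)) - a (\<phi> k) * qf n Y (s (\<phi> k))) \<longlonglongrightarrow> qf n X l - c * qf n Y l"
    using l by (intro tendsto_intros qf_tendsto aphi) auto
  hence "qf n X l - c * qf n Y l \<le> 0"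
    by (rule LIMSEQ_le_const2) (use sneg less_imp_le in blast)
  with nz show ?thesis by blast
qed



lemma poly_nonzero_value:
  fixes v :: "nat \<Rightarrow> real" and S :: "real set"
  assumes nz: "\<exists>i<r+1. v i \<noteq> 0" and big: "infinite S \<or> r < card S"
  shows "\<exists>s\<in>S. (\<Sum>i<r+1. v i * s^i) \<noteq> 0"
proof (rule ccontr)
  assume "\<not> ?thesis"
  hence all: "\<forall>s\<in>S. (\<Sum>i<r+1. v i * s^i) = 0" by blast
  define p where "p = (\<Sum>i<r+1. monom (v i) i)"
  have pe: "poly p t = (\<Sum>i<r+1. v i * t^i)" for t unfolding p_def by (simp add: poly_sum poly_monom)
  have ce: "coeff p k = (if k < r+1 then v k else 0)" for k
    unfolding p_def coeff_sum by (simp add: coeff_monom sum.delta)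
  have "p \<noteq> 0" using nz ce by (metis coeff_0)
  have dp: "degree p \<le> r" unfolding p_def
    by (rule degree_sum_le) (auto intro: order.trans[OF degree_monom_le])
  have sub: "S \<subseteq> {x. poly p x = 0}" using all pe by auto
  have fin: "finite {x. poly p x = 0}" by (rule poly_roots_finite[OF \<open>p \<noteq> 0\<close>])
  hence "finite S" using sub finite_subset by blast
  moreover have "card S \<le> r"
    using card_mono[OF fin sub] card_poly_roots_bound[OF \<open>p \<noteq> 0\<close>] dp by linarith
  ultimately show False using big by simp
qed



definition Lset :: "(nat \<Rightarrow> real) \<Rightarrow> nat \<Rightarrow> real set" where
  "Lset m r = {a. psd_mat (r + 1) (\<lambda>i j. hankel1 m i j - a * hankel0 m i j)}"

definition Uset :: "(nat \<Rightarrow> real) \<Rightarrow> nat \<Rightarrow> real set" where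
  "Uset m r = {a. psd_mat (r + 1) (\<lambda>i j. a * hankel0 m i j - hankel1 m i j)}"

lemma psd_qf: "psd_mat n A = (\<forall>v. 0 \<le> qf n A v)"
  by (simp add: psd_mat_def qf_def)

lemma Lset_iff: "a \<in> Lset m r \<longleftrightarrow> (\<forall>v. 0 \<le> qf (r+1) (hankel1 m) v - a * qf (r+1) (hankel0 m) v)"
  unfolding Lset_def psd_qf qf_diff[symmetric] by simp

lemma Uset_iff: "a \<in> Uset m r \<longleftrightarrow> (\<forall>v. 0 \<le> a * qf (r+1) (hankel0 m) v - qf (r+1) (hankel1 m) v)"
  unfolding Uset_def psd_qf qf_diff2[symmetric] by simp

lemma sum_delta0: "(\<Sum>j<Suc k. c j * (if j = 0 then 1 else 0 :: real)) = c 0"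
  by (induction k) auto

lemma qf_e0: "qf (Suc k) X (\<lambda>i. if i = 0 then 1 else 0) = X 0 0"
proof -
  have "qf (Suc k) X (\<lambda>i. if i = 0 then 1 else 0) = (\<Sum>i<Suc k. (X i 0) * (if i = 0 then 1 else 0 :: real))"
    unfolding qf_def by (subst sum_delta0) (simp add: mult.commute)
  also have "\<dots> = X 0 0" by (rule sum_delta0)
  finally show ?thesis .
qed

locale thm_setting =
  fixes \<Omega> :: "'a::euclidean_space set" and f :: "'a \<Rightarrow> real" and M :: "'a measure"
  assumes cpt: "compact \<Omega>" and int: "interior \<Omega> \<noteq> {}"
    and cont: "continuous_on \<Omega> f"
    and sp: "space M = \<Omega>" and sets: "sets M = sets (restrict_space borel \<Omega>)"
    and fin: "finite_measure M"
    and supp: "measure_support M \<Omega> = \<Omega>"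
begin

abbreviation "m \<equiv> push_moment M f"
abbreviation "fmin \<equiv> Inf (f ` \<Omega>)"
abbreviation "fmax \<equiv> Sup (f ` \<Omega>)"

lemma ne: "\<Omega> \<noteq> {}" using int interior_subset by blast

lemma fmeas[measurable]: "f \<in> borel_measurable M"
  unfolding measurable_cong_sets[OF sets refl] by (rule borel_measurable_continuous_on_restrict[OF cont])

lemma fcpt: "compact (f ` \<Omega>)" by (rule compact_continuous_image[OF cont cpt])

lemma fbdd: "bdd_above (f ` \<Omega>)" "bdd_below (f ` \<Omega>)"
  using fcpt by (auto intro: bounded_imp_bdd_above bounded_imp_bdd_below compact_imp_bounded)

lemma fbnd: "x \<in> \<Omega> \<Longrightarrow> fmin \<le> f x \<and> f x \<le> fmax"
  using fbdd by (auto intro: cInf_lower cSup_upper)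

lemma fmin_in: "fmin \<in> f ` \<Omega>"
  using ne fbdd fcpt by (intro closed_contains_Inf) (auto intro: compact_imp_closed)

lemma fmax_in: "fmax \<in> f ` \<Omega>"
  using ne fbdd fcpt by (intro closed_contains_Sup) (auto intro: compact_imp_closed)

lemma suppD: "x \<in> \<Omega> \<Longrightarrow> open U \<Longrightarrow> x \<in> U \<Longrightarrow> emeasure M (U \<inter> \<Omega>) > 0"
  using supp unfolding measure_support_def by blast

lemma intpow: "integrable M (\<lambda>x. f x ^ k)"
proof -
  interpret finite_measure M by (rule fin)
  show ?thesis
  proof (rule integrable_const_bound[where B="(\<bar>fmin\<bar> + \<bar>fmax\<bar>)^k"])
    show "AE x in M. norm (f x ^ k) \<le> (\<bar>fmin\<bar> + \<bar>fmax\<bar>)^k"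
    proof (rule AE_I2)
      fix x assume "x \<in> space M"
      hence "fmin \<le> f x \<and> f x \<le> fmax" using fbnd sp by auto
      hence "\<bar>f x\<bar> \<le> \<bar>fmin\<bar> + \<bar>fmax\<bar>" by linarith
      thus "norm (f x ^ k) \<le> (\<bar>fmin\<bar> + \<bar>fmax\<bar>)^k" by (simp add: power_abs power_mono)
    qed
  qed measurable
qed

lemma m0: "m 0 = measure M \<Omega>"
  by (simp add: push_moment_def sp)

lemma m0pos: "m 0 > 0"
proof -
  interpret finite_measure M by (rule fin)
  obtain x where "x \<in> \<Omega>" using ne by blast
  from suppD[OF this open_UNIV] have "emeasure M \<Omega> > 0" by simp
  thus ?thesis unfolding m0 by (simp add: emeasure_eq_measure)
qed

lemma QL: "qf n (hankel1 m) v - a * qf n (hankel0 m) v = (\<integral>x. (f x - a) * (\<Sum>i<n. v i * f x ^ i)^2 \<partial>M)"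
proof -
  have "qf n (hankel1 m) v - a * qf n (hankel0 m) v = qf n (\<lambda>i j. hankel1 m i j - a * hankel0 m i j) v"
    by (rule qf_diff[symmetric])
  also have "\<dots> = (\<Sum>i<n. \<Sum>j<n. v i * (1 * m (i+j+1) + (-a) * m (i+j)) * v j)"
    unfolding qf_def hankel0_def hankel1_def by simp
  also have "\<dots> = (\<integral>x. (1 * f x + (-a)) * (\<Sum>i<n. v i * f x ^ i)^2 \<partial>M)"
    by (rule quad_integral[OF intpow])
  finally show ?thesis by simp
qed

lemma QU: "a * qf n (hankel0 m) v - qf n (hankel1 m) v = (\<integral>x. (a - f x) * (\<Sum>i<n. v i * f x ^ i)^2 \<partial>M)"
proof -
  have "a * qf n (hankel0 m) v - qf n (hankel1 m) v = qf n (\<lambda>i j. a * hankel0 m i j - hankel1 m i j) v"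
    by (rule qf_diff2[symmetric])
  also have "\<dots> = (\<Sum>i<n. \<Sum>j<n. v i * ((-1) * m (i+j+1) + a * m (i+j)) * v j)"
    unfolding qf_def hankel0_def hankel1_def by simp
  also have "\<dots> = (\<integral>x. ((-1) * f x + a) * (\<Sum>i<n. v i * f x ^ i)^2 \<partial>M)"
    by (rule quad_integral[OF intpow])
  finally show ?thesis by simp
qed

lemma Q0: "qf n (hankel0 m) v = (\<integral>x. (\<Sum>i<n. v i * f x ^ i)^2 \<partial>M)"
proof -
  have "qf n (hankel0 m) v = (\<Sum>i<n. \<Sum>j<n. v i * (0 * m (i+j+1) + 1 * m (i+j)) * v j)"
    unfolding qf_def hankel0_def by simp
  also have "\<dots> = (\<integral>x. (0 * f x + 1) * (\<Sum>i<n. v i * f x ^ i)^2 \<partial>M)"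
    by (rule quad_integral[OF intpow])
  finally show ?thesis by simp
qed

lemma Q0nn: "qf n (hankel0 m) v \<ge> 0"
  unfolding Q0 by (rule integral_nonneg_AE) simp

lemma fmin_L: "fmin \<in> Lset m r"
  unfolding Lset_iff
proof
  fix v show "0 \<le> qf (r+1) (hankel1 m) v - fmin * qf (r+1) (hankel0 m) v"
    unfolding QL by (rule integral_nonneg_AE, rule AE_I2) (use fbnd sp in auto)
qed

lemma fmax_U: "fmax \<in> Uset m r"
  unfolding Uset_iff
proof
  fix v show "0 \<le> fmax * qf (r+1) (hankel0 m) v - qf (r+1) (hankel1 m) v"
    unfolding QU by (rule integral_nonneg_AE, rule AE_I2) (use fbnd sp in auto)
qed

lemma LU: "a \<in> Lset m r \<Longrightarrow> b \<in> Uset m r' \<Longrightarrow> a \<le> b"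
proof -
  assume a: "a \<in> Lset m r" and b: "b \<in> Uset m r'"
  define e0 where "e0 = (\<lambda>i::nat. if i = 0 then 1 else (0::real))"
  have "0 \<le> qf (Suc r) (hankel1 m) e0 - a * qf (Suc r) (hankel0 m) e0" using a unfolding Lset_iff by simp
  hence 1: "0 \<le> m 1 - a * m 0" unfolding e0_def qf_e0 by (simp add: hankel0_def hankel1_def)
  have "0 \<le> b * qf (Suc r') (hankel0 m) e0 - qf (Suc r') (hankel1 m) e0" using b unfolding Uset_iff by simp
  hence 2: "0 \<le> b * m 0 - m 1" unfolding e0_def qf_e0 by (simp add: hankel0_def hankel1_def)
  from 1 2 have "a * m 0 \<le> b * m 0" by linarith
  thus "a \<le> b" using m0pos by simp
qed

lemma L_ne: "Lset m r \<noteq> {}" using fmin_L by blast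
lemma U_ne: "Uset m r \<noteq> {}" using fmax_U by blast
lemma L_bdd: "bdd_above (Lset m r)" unfolding bdd_above_def using LU[OF _ fmax_U] by blast
lemma U_bdd: "bdd_below (Uset m r)" unfolding bdd_below_def using LU[OF fmin_L] by blast

lemma tl: "tau_lower m r = Sup (Lset m r)" by (simp add: tau_lower_def Lset_def)
lemma tu: "tau_upper m r = Inf (Uset m r)" by (simp add: tau_upper_def Uset_def)

lemma part1: "fmin \<le> tau_lower m r \<and> tau_lower m r \<le> tau_upper m r \<and> tau_upper m r \<le> fmax"
proof (intro conjI)
  show "fmin \<le> tau_lower m r" unfolding tl by (rule cSup_upper[OF fmin_L L_bdd])
  show "tau_upper m r \<le> fmax" unfolding tu by (rule cInf_lower[OF fmax_U U_bdd])
  show "tau_lower m r \<le> tau_upper m r" unfolding tl tu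
    by (rule cSup_least[OF L_ne], rule cInf_greatest[OF U_ne]) (rule LU)
qed

lemma dec: "decseq (tau_lower m)"
proof (rule decseq_SucI)
  fix r
  have "Lset m (Suc r) \<subseteq> Lset m r"
    unfolding Lset_def using psd_mat_Suc by auto
  thus "tau_lower m (Suc r) \<le> tau_lower m r" unfolding tl by (rule cSup_subset_mono[OF L_ne L_bdd])
qed

lemma inc: "incseq (tau_upper m)"
proof (rule incseq_SucI)
  fix r
  have "Uset m (Suc r) \<subseteq> Uset m r"
    unfolding Uset_def using psd_mat_Suc by auto
  thus "tau_upper m r \<le> tau_upper m (Suc r)" unfolding tu by (rule cInf_superset_mono[OF U_ne U_bdd])
qed


lemma lim_lower: "tau_lower m \<longlonglongrightarrow> fmin"
  unfolding LIMSEQ_iff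
proof (intro allI impI)
  fix e :: real assume e: "e > 0"
  define \<epsilon> where "\<epsilon> = e / 2"
  have eps: "\<epsilon> > 0" using e unfolding \<epsilon>_def by simp
  obtain x0 where x0: "x0 \<in> \<Omega>" "f x0 = fmin" using fmin_in by auto
  obtain V where V: "open V" "V \<inter> \<Omega> = f -` {..<fmin + \<epsilon>/4} \<inter> \<Omega>"
    using cont unfolding continuous_on_open_invariant by (meson open_lessThan)
  have "x0 \<in> V" using V(2) x0 eps by auto
  from suppD[OF x0(1) V(1) this] have pos0: "emeasure M (V \<inter> \<Omega>) > 0" .
  have "V \<inter> \<Omega> = {x\<in>space M. f x < fmin + \<epsilon>/4}" using V(2) sp by auto
  with pos0 have pos: "emeasure M {x\<in>space M. f x < fmin + \<epsilon>/4} > 0" by simp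
  from core[OF fin fmeas _ eps pos, of fmax] fbnd sp
  obtain N where N: "\<forall>r\<ge>N. \<exists>v. (\<integral>x. (f x - (fmin + \<epsilon>)) * (\<Sum>i<r+1. v i * f x ^ i)^2 \<partial>M) < 0"
    by auto
  show "\<exists>no. \<forall>n\<ge>no. norm (tau_lower m n - fmin) < e"
  proof (intro exI allI impI)
    fix r assume "N \<le> r"
    with N obtain v where v: "(\<integral>x. (f x - (fmin + \<epsilon>)) * (\<Sum>i<r+1. v i * f x ^ i)^2 \<partial>M) < 0" by blast
    hence vq: "qf (r+1) (hankel1 m) v - (fmin + \<epsilon>) * qf (r+1) (hankel0 m) v < 0" unfolding QL .
    have "tau_lower m r \<le> fmin + \<epsilon>" unfolding tl
    proof (rule cSup_least[OF L_ne])
      fix a assume a: "a \<in> Lset m r"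
      show "a \<le> fmin + \<epsilon>"
      proof (rule ccontr)
        assume "\<not> a \<le> fmin + \<epsilon>"
        hence "(fmin + \<epsilon>) * qf (r+1) (hankel0 m) v \<le> a * qf (r+1) (hankel0 m) v"
          using Q0nn by (intro mult_right_mono) auto
        moreover have "0 \<le> qf (r+1) (hankel1 m) v - a * qf (r+1) (hankel0 m) v" using a unfolding Lset_iff by blast
        ultimately show False using vq by linarith
      qed
    qed
    moreover have "fmin \<le> tau_lower m r" using part1 by blast
    ultimately show "norm (tau_lower m r - fmin) < e" using eps unfolding \<epsilon>_def by simp
  qed
qed

lemma lim_upper: "tau_upper m \<longlonglongrightarrow> fmax"
  unfolding LIMSEQ_iff
proof (intro allI impI)
  fix e :: real assume e: "e > 0"
  define \<epsilon> where "\<epsilon> = e / 2"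
  have eps: "\<epsilon> > 0" using e unfolding \<epsilon>_def by simp
  obtain x0 where x0: "x0 \<in> \<Omega>" "f x0 = fmax" using fmax_in by auto
  obtain V where V: "open V" "V \<inter> \<Omega> = f -` {fmax - \<epsilon>/4<..} \<inter> \<Omega>"
    using cont unfolding continuous_on_open_invariant by (meson open_greaterThan)
  have "x0 \<in> V" using V(2) x0 eps by auto
  from suppD[OF x0(1) V(1) this] have pos0: "emeasure M (V \<inter> \<Omega>) > 0" .
  have "V \<inter> \<Omega> = {x\<in>space M. - f x < - fmax + \<epsilon>/4}" using V(2) sp by auto
  with pos0 have pos: "emeasure M {x\<in>space M. - f x < - fmax + \<epsilon>/4} > 0" by simp
  have bnd': "\<And>x. x \<in> space M \<Longrightarrow> - fmax \<le> - f x \<and> - f x \<le> - fmin" using fbnd sp by auto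
  from core[OF fin _ bnd' eps pos]
  obtain N where N: "\<forall>r\<ge>N. \<exists>v. (\<integral>x. (- f x - (- fmax + \<epsilon>)) * (\<Sum>i<r+1. v i * (- f x) ^ i)^2 \<partial>M) < 0"
    by auto
  show "\<exists>no. \<forall>n\<ge>no. norm (tau_upper m n - fmax) < e"
  proof (intro exI allI impI)
    fix r assume "N \<le> r"
    with N obtain v where v: "(\<integral>x. (- f x - (- fmax + \<epsilon>)) * (\<Sum>i<r+1. v i * (- f x) ^ i)^2 \<partial>M) < 0" by blast
    define w where "w i = (-1)^i * v i" for i
    have "(\<lambda>x. (- f x - (- fmax + \<epsilon>)) * (\<Sum>i<r+1. v i * (- f x) ^ i)^2) =
          (\<lambda>x. ((fmax - \<epsilon>) - f x) * (\<Sum>i<r+1. w i * f x ^ i)^2)"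
      unfolding w_def by (rule ext) (simp add: power_minus[of "f _"] mult.assoc mult.left_commute)
    with v have "(\<integral>x. ((fmax - \<epsilon>) - f x) * (\<Sum>i<r+1. w i * f x ^ i)^2 \<partial>M) < 0" by simp
    hence vq: "(fmax - \<epsilon>) * qf (r+1) (hankel0 m) w - qf (r+1) (hankel1 m) w < 0" unfolding QU .
    have "fmax - \<epsilon> \<le> tau_upper m r" unfolding tu
    proof (rule cInf_greatest[OF U_ne])
      fix a assume a: "a \<in> Uset m r"
      show "fmax - \<epsilon> \<le> a"
      proof (rule ccontr)
        assume "\<not> fmax - \<epsilon> \<le> a"
        hence "a * qf (r+1) (hankel0 m) w \<le> (fmax - \<epsilon>) * qf (r+1) (hankel0 m) w"
          using Q0nn by (intro mult_right_mono) auto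
        moreover have "0 \<le> a * qf (r+1) (hankel0 m) w - qf (r+1) (hankel1 m) w" using a unfolding Uset_iff by blast
        ultimately show False using vq by linarith
      qed
    qed
    moreover have "tau_upper m r \<le> fmax" using part1 by blast
    ultimately show "norm (tau_upper m r - fmax) < e" using eps unfolding \<epsilon>_def by simp
  qed
qed


lemma h_sym: "hankel1 m i j = hankel1 m j i" "hankel0 m i j = hankel0 m j i"
  by (simp_all add: hankel0_def hankel1_def add.commute)

lemma qf_eig:
  assumes "\<forall>i<n. (\<Sum>j<n. A i j * v j) = t * (\<Sum>j<n. C i j * v j)"
  shows "qf n A v = t * qf n C v"
proof -
  have "qf n A v = (\<Sum>i<n. v i * (\<Sum>j<n. A i j * v j))" unfolding qf_def by (simp add: sum_distrib_left mult.assoc)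
  also have "\<dots> = (\<Sum>i<n. v i * (t * (\<Sum>j<n. C i j * v j)))" using assms by simp
  also have "\<dots> = t * qf n C v" unfolding qf_def by (simp add: sum_distrib_left mult.assoc mult.left_commute)
  finally show ?thesis .
qed

lemma PD:
  assumes big: "infinite (f ` \<Omega>) \<or> r < card (f ` \<Omega>)" and nz: "\<exists>i<r+1. v i \<noteq> 0"
  shows "qf (r+1) (hankel0 m) v > 0"
proof -
  define P where "P x = (\<Sum>i<r+1. v i * f x ^ i)" for x
  obtain s where s: "s \<in> f ` \<Omega>" "(\<Sum>i<r+1. v i * s^i) \<noteq> 0" using poly_nonzero_value[OF nz big] by blast
  then obtain x2 where x2: "x2 \<in> \<Omega>" "P x2 \<noteq> 0" unfolding P_def by auto
  have cP: "continuous_on \<Omega> P" unfolding P_def by (intro continuous_intros cont)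
  obtain V where V: "open V" "V \<inter> \<Omega> = P -` (- {0}) \<inter> \<Omega>"
    using cP unfolding continuous_on_open_invariant by (meson open_Compl closed_singleton)
  have "x2 \<in> V" using V(2) x2 by auto
  from suppD[OF x2(1) V(1) this] have pos0: "emeasure M (V \<inter> \<Omega>) > 0" .
  have Veq: "V \<inter> \<Omega> = {x\<in>space M. (P x)^2 \<noteq> 0}" using V(2) sp by auto
  have Pm[measurable]: "P \<in> borel_measurable M" unfolding P_def by measurable
  have sq: "(P x)^2 = (\<Sum>i<r+1. \<Sum>j<r+1. v i * v j * f x ^ (i+j))" for x
    unfolding P_def power2_eq_square sum_product by (intro sum.cong refl) (simp add: power_add algebra_simps)
  have iP: "integrable M (\<lambda>x. (P x)^2)"
    unfolding sq by (intro Bochner_Integration.integrable_sum integrable_mult_right intpow)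
  have nn: "qf (r+1) (hankel0 m) v \<ge> 0" by (rule Q0nn)
  moreover have "qf (r+1) (hankel0 m) v \<noteq> 0"
  proof
    assume "qf (r+1) (hankel0 m) v = 0"
    hence "(\<integral>x. (P x)^2 \<partial>M) = 0" unfolding Q0 P_def .
    hence "AE x in M. (P x)^2 = 0" using integral_nonneg_eq_0_iff_AE[OF iP] by simp
    hence "emeasure M {x\<in>space M. \<not> (P x)^2 = 0} = 0"
      by (subst (asm) AE_iff_measurable[OF _ refl]) auto
    with pos0 Veq show False by simp
  qed
  ultimately show ?thesis by simp
qed

lemma eig_lower:
  assumes big: "infinite (f ` \<Omega>) \<or> r < card (f ` \<Omega>)"
  shows "tau_lower m r = gen_eig_min (r + 1) (hankel1 m) (hankel0 m)"
proof -
  define n where "n = r + 1"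
  define E where "E = gen_eigenvalues n (hankel1 m) (hankel0 m)"
  define lam where "lam = tau_lower m r"
  have pd: "\<And>v. (\<exists>i<n. v i \<noteq> 0) \<Longrightarrow> (\<Sum>i<n. \<Sum>j<n. v i * hankel0 m i j * v j) > 0"
    using PD[OF big] unfolding n_def qf_def by blast
  have Efin: "finite E" unfolding E_def
    by (rule gen_eig_finite) (auto intro: h_sym pd)
  have a: "0 \<le> qf n (hankel1 m) v - lam * qf n (hankel0 m) v" for v
  proof (cases "qf n (hankel0 m) v = 0")
    case True
    have "0 \<le> qf n (hankel1 m) v - fmin * qf n (hankel0 m) v" using fmin_L[of r] unfolding Lset_iff n_def by blast
    thus ?thesis using True by simp
  next
    case False
    hence q0: "qf n (hankel0 m) v > 0" using Q0nn[of n v] by simp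
    have "lam \<le> qf n (hankel1 m) v / qf n (hankel0 m) v" unfolding lam_def tl
    proof (rule cSup_least[OF L_ne])
      fix a assume "a \<in> Lset m r"
      hence "0 \<le> qf n (hankel1 m) v - a * qf n (hankel0 m) v" unfolding Lset_iff n_def by blast
      thus "a \<le> qf n (hankel1 m) v / qf n (hankel0 m) v" using q0 by (simp add: le_divide_eq)
    qed
    thus ?thesis using q0 by (simp add: le_divide_eq)
  qed
  have b: "lam \<le> t" if "t \<in> E" for t
  proof -
    from that obtain v where v1: "\<exists>i<n. v i \<noteq> 0"
      and v2: "\<forall>i<n. (\<Sum>j<n. hankel1 m i j * v j) = t * (\<Sum>j<n. hankel0 m i j * v j)"
      unfolding E_def gen_eigenvalues_def by blast
    have e: "qf n (hankel1 m) v = t * qf n (hankel0 m) v" by (rule qf_eig[OF v2])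
    have q0: "qf n (hankel0 m) v > 0" using pd[OF v1] unfolding qf_def .
    from a[of v] e have "0 \<le> (t - lam) * qf n (hankel0 m) v" by (simp add: algebra_simps)
    thus ?thesis using q0 by (simp add: zero_le_mult_iff)
  qed
  have c: "lam \<in> E"
  proof -
    define ak where "ak k = lam + inverse (real (Suc k))" for k
    have neg: "\<exists>w. qf n (hankel1 m) w - ak k * qf n (hankel0 m) w < 0" for k
    proof -
      have "ak k > lam" unfolding ak_def by simp
      hence "ak k \<notin> Lset m r" using cSup_upper[OF _ L_bdd, of "ak k" r] unfolding lam_def tl by force
      thus ?thesis unfolding Lset_iff n_def by (auto simp: not_le)
    qed
    have lim: "ak \<longlonglongrightarrow> lam" unfolding ak_def
      using tendsto_add[OF tendsto_const LIMSEQ_inverse_real_of_nat] by simp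
    from extract_vec[OF neg lim] obtain v where v1: "\<exists>i<n. v i \<noteq> 0"
      and v2: "qf n (hankel1 m) v - lam * qf n (hankel0 m) v \<le> 0" by blast
    have z: "qf n (\<lambda>i j. hankel1 m i j - lam * hankel0 m i j) v = 0" unfolding qf_diff using a[of v] v2 by simp
    have psd: "psd_mat n (\<lambda>i j. hankel1 m i j - lam * hankel0 m i j)" unfolding psd_qf qf_diff using a by blast
    from psd_null[OF psd _ z[unfolded qf_def]]
    have "\<forall>i<n. (\<Sum>j<n. (hankel1 m i j - lam * hankel0 m i j) * v j) = 0" by (simp add: h_sym)
    hence "\<forall>i<n. (\<Sum>j<n. hankel1 m i j * v j) = lam * (\<Sum>j<n. hankel0 m i j * v j)"
      by (simp add: left_diff_distrib sum_subtractf sum_distrib_left mult.assoc)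
    thus ?thesis using v1 unfolding E_def gen_eigenvalues_def by blast
  qed
  have "Min E = lam" by (rule Min_eqI[OF Efin b c])
  thus ?thesis unfolding gen_eig_min_def E_def n_def lam_def by simp
qed


lemma qf_neg: "qf n (\<lambda>i j. - A i j) v = - qf n A v"
  unfolding qf_def by (simp add: sum_negf)

lemma eig_upper:
  assumes big: "infinite (f ` \<Omega>) \<or> r < card (f ` \<Omega>)"
  shows "tau_upper m r = gen_eig_max (r + 1) (hankel1 m) (hankel0 m)"
proof -
  define n where "n = r + 1"
  define E where "E = gen_eigenvalues n (hankel1 m) (hankel0 m)"
  define mu where "mu = tau_upper m r"
  have pd: "\<And>v. (\<exists>i<n. v i \<noteq> 0) \<Longrightarrow> (\<Sum>i<n. \<Sum>j<n. v i * hankel0 m i j * v j) > 0"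
    using PD[OF big] unfolding n_def qf_def by blast
  have Efin: "finite E" unfolding E_def
    by (rule gen_eig_finite) (auto intro: h_sym pd)
  have a: "0 \<le> mu * qf n (hankel0 m) v - qf n (hankel1 m) v" for v
  proof (cases "qf n (hankel0 m) v = 0")
    case True
    have "0 \<le> fmax * qf n (hankel0 m) v - qf n (hankel1 m) v" using fmax_U[of r] unfolding Uset_iff n_def by blast
    thus ?thesis using True by simp
  next
    case False
    hence q0: "qf n (hankel0 m) v > 0" using Q0nn[of n v] by simp
    have "qf n (hankel1 m) v / qf n (hankel0 m) v \<le> mu" unfolding mu_def tu
    proof (rule cInf_greatest[OF U_ne])
      fix a assume "a \<in> Uset m r"
      hence "0 \<le> a * qf n (hankel0 m) v - qf n (hankel1 m) v" unfolding Uset_iff n_def by blast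
      thus "qf n (hankel1 m) v / qf n (hankel0 m) v \<le> a" using q0 by (simp add: divide_le_eq)
    qed
    thus ?thesis using q0 by (simp add: divide_le_eq)
  qed
  have b: "t \<le> mu" if "t \<in> E" for t
  proof -
    from that obtain v where v1: "\<exists>i<n. v i \<noteq> 0"
      and v2: "\<forall>i<n. (\<Sum>j<n. hankel1 m i j * v j) = t * (\<Sum>j<n. hankel0 m i j * v j)"
      unfolding E_def gen_eigenvalues_def by blast
    have e: "qf n (hankel1 m) v = t * qf n (hankel0 m) v" by (rule qf_eig[OF v2])
    have q0: "qf n (hankel0 m) v > 0" using pd[OF v1] unfolding qf_def .
    from a[of v] e have "0 \<le> (mu - t) * qf n (hankel0 m) v" by (simp add: algebra_simps)
    thus ?thesis using q0 by (simp add: zero_le_mult_iff)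
  qed
  have c: "mu \<in> E"
  proof -
    define ak where "ak k = mu - inverse (real (Suc k))" for k
    have neg: "\<exists>w. qf n (\<lambda>i j. - hankel1 m i j) w - ak k * qf n (\<lambda>i j. - hankel0 m i j) w < 0" for k
    proof -
      have "ak k < mu" unfolding ak_def by simp
      hence "ak k \<notin> Uset m r" using cInf_lower[OF _ U_bdd, of "ak k" r] unfolding mu_def tu by force
      thus ?thesis unfolding Uset_iff n_def qf_neg by (auto simp: not_le)
    qed
    have lim: "ak \<longlonglongrightarrow> mu" unfolding ak_def
      using tendsto_diff[OF tendsto_const LIMSEQ_inverse_real_of_nat] by simp
    from extract_vec[OF neg lim] obtain v where v1: "\<exists>i<n. v i \<noteq> 0"
      and v2: "qf n (\<lambda>i j. - hankel1 m i j) v - mu * qf n (\<lambda>i j. - hankel0 m i j) v \<le> 0" by blast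
    have z: "qf n (\<lambda>i j. mu * hankel0 m i j - hankel1 m i j) v = 0"
      unfolding qf_diff2 using a[of v] v2 unfolding qf_neg by simp
    have psd: "psd_mat n (\<lambda>i j. mu * hankel0 m i j - hankel1 m i j)" unfolding psd_qf qf_diff2 using a by blast
    from psd_null[OF psd _ z[unfolded qf_def]]
    have "\<forall>i<n. (\<Sum>j<n. (mu * hankel0 m i j - hankel1 m i j) * v j) = 0" by (simp add: h_sym)
    hence "\<forall>i<n. (\<Sum>j<n. hankel1 m i j * v j) = mu * (\<Sum>j<n. hankel0 m i j * v j)"
      by (simp add: left_diff_distrib sum_subtractf sum_distrib_left mult.assoc)
    thus ?thesis using v1 unfolding E_def gen_eigenvalues_def by blast
  qed
  have "Max E = mu" by (rule Max_eqI[OF Efin b c])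
  thus ?thesis unfolding gen_eig_max_def E_def n_def mu_def by simp
qed

end

theorem theorem2p3:
  fixes \<Omega> :: "'a::euclidean_space set" and f :: "'a \<Rightarrow> real" and M :: "'a measure"
  assumes "compact \<Omega>" and "interior \<Omega> \<noteq> {}"
    and "continuous_on \<Omega> f"
    and "space M = \<Omega>" and "sets M = sets (restrict_space borel \<Omega>)"
    and "finite_measure M"
    and "measure_support M \<Omega> = \<Omega>"
  shows "(\<forall>r. Inf (f ` \<Omega>) \<le> tau_lower (push_moment M f) r
              \<and> tau_lower (push_moment M f) r \<le> tau_upper (push_moment M f) r
              \<and> tau_upper (push_moment M f) r \<le> Sup (f ` \<Omega>))
       \<and> decseq (tau_lower (push_moment M f))
       \<and> incseq (tau_upper (push_moment M f))
       \<and> tau_lower (push_moment M f) \<longlonglongrightarrow> Inf (f ` \<Omega>)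
       \<and> tau_upper (push_moment M f) \<longlonglongrightarrow> Sup (f ` \<Omega>)
       \<and> (\<forall>r. (infinite (f ` \<Omega>) \<or> r < card (f ` \<Omega>)) \<longrightarrow>
            tau_lower (push_moment M f) r =
              gen_eig_min (r + 1) (hankel1 (push_moment M f)) (hankel0 (push_moment M f))
          \<and> tau_upper (push_moment M f) r =
              gen_eig_max (r + 1) (hankel1 (push_moment M f)) (hankel0 (push_moment M f)))"
proof -
  interpret thm_setting \<Omega> f M by (rule thm_setting.intro) (fact assms)+
  show ?thesis using part1 dec inc lim_lower lim_upper eig_lower eig_upper by blast
qed

end
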